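(* $$\bigcup_{w\in A_1(\mathbb R^n)}L^1_w(\mathbb R^n)=\bigcup\{\mathcal X: M \text{ is bounded on } \mathcal X'\}=\bigcup\{\mathcal X:\mathcal X'\cap A_1(\mathbb R^n)\neq\varnothing\},$$ where the unions on the right are over Banach function spaces $\mathcal X$ on $\mathbb R^n$ with the stated property of the associate space $\mathcal X'$.
   Context: $Mf(x)=\sup_{Q\ni x}|Q|^{-1}\int_Q|f|$ over cubes $Q$. A weight is an a.e. positive locally integrable function; $A_1(\mathbb R^n)$ is the class of weights $w$ with $Mw\le Cw$ a.e. for some constant $C$; $L^1_w(\mathbb R^n)=\{f:\int|f|w<\infty\}$. A Banach function norm is a map $\rho$ from nonnegative measurable functions on $\mathbb R^n$ to $[0,\infty]$ such that: (i) $\rho(f)=0$ iff $f=0$ a.e., $\rho(af)=a\rho(f)$ for $a>0$, $\rho(f+g)\le\rho(f)+\rho(g)$; (ii) if $0\le f\le g$ a.e. then $\rho(f)\le\rho(g)$; (iii) if $f_n\uparrow f$ a.e. then $\rho(f_n)\uparrow\rho(f)$; (iv) $\rho(\chi_B)<\infty$ for every bounded set $B$; (v) for every bounded set $B$ there is $C_B\in(0,\infty)$ with $\int_Bf\,dx\le C_B\rho(f)$. The Banach function space $\mathcal X$ is the set of measurable $f$ with $\|f\|_{\mathcal X}=\rho(|f|)<\infty$. Its associate space $\mathcal X'$ is the set of measurable $g$ with $fg\in L^1(\mathbb R^n)$ for all $f\in\mathcal X$, normed by $\|g\|_{\mathcal X'}=\sup\{\int|fg|:\|f\|_{\mathcal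 X}\le1\}$. $M$ bounded on $\mathcal X'$ means $\|Mg\|_{\mathcal X'}\le C\|g\|_{\mathcal X'}$ for all $g\in\mathcal X'$. *)

theory Defs
  imports "HOL-Analysis.Analysis"
begin

definition cubes :: "(real^'n) set set" where
  "cubes = {Q. \<exists>a h. h > 0 \<and> Q = cbox a (a + h *\<^sub>R One)}"

definition maximal :: "(real^'n \<Rightarrow> real) \<Rightarrow> real^'n \<Rightarrow> ennreal" where
  "maximal f x = (SUP Q\<in>{Q\<in>cubes. x \<in> Q}.
      (\<integral>\<^sup>+ y. indicator Q y * ennreal \<bar>f y\<bar> \<partial>lebesgue) / emeasure lebesgue Q)"

definition weight :: "(real^'n \<Rightarrow> real) \<Rightarrow> bool" where
  "weight w \<longleftrightarrow> w \<in> borel_measurable lebesgue \<and> (AE x in lebesgue. w x > 0)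
     \<and> (\<forall>K. compact K \<longrightarrow> set_integrable lebesgue K w)"

definition A1 :: "(real^'n \<Rightarrow> real) set" where
  "A1 = {w. weight w \<and> (\<exists>C::real. AE x in lebesgue. maximal w x \<le> ennreal (C * w x))}"

definition L1w :: "(real^'n \<Rightarrow> real) \<Rightarrow> (real^'n \<Rightarrow> real) set" where
  "L1w w = {f. f \<in> borel_measurable lebesgue \<and>
              (\<integral>\<^sup>+ x. ennreal (\<bar>f x\<bar> * w x) \<partial>lebesgue) < \<infinity>}"

definition banach_function_norm :: "((real^'n \<Rightarrow> ennreal) \<Rightarrow> ennreal) \<Rightarrow> bool" where
  "banach_function_norm \<rho> \<longleftrightarrow>
    (\<forall>f \<in> borel_measurable lebesgue. \<rho> f = 0 \<longleftrightarrow> (AE x in lebesgue. f x = 0)) \<and>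
    (\<forall>f \<in> borel_measurable lebesgue. \<forall>a::real. a > 0 \<longrightarrow> \<rho> (\<lambda>x. ennreal a * f x) = ennreal a * \<rho> f) \<and>
    (\<forall>f \<in> borel_measurable lebesgue. \<forall>g \<in> borel_measurable lebesgue.
        \<rho> (\<lambda>x. f x + g x) \<le> \<rho> f + \<rho> g) \<and>
    (\<forall>f \<in> borel_measurable lebesgue. \<forall>g \<in> borel_measurable lebesgue.
        (AE x in lebesgue. f x \<le> g x) \<longrightarrow> \<rho> f \<le> \<rho> g) \<and>
    (\<forall>F f. (\<forall>k. F k \<in> borel_measurable lebesgue) \<longrightarrow> f \<in> borel_measurable lebesgue \<longrightarrow>
        (AE x in lebesgue. incseq (\<lambda>k. F k x) \<and> (\<lambda>k. F k x) \<longlonglongrightarrow> f x) \<longrightarrow>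
        incseq (\<lambda>k. \<rho> (F k)) \<and> (\<lambda>k. \<rho> (F k)) \<longlonglongrightarrow> \<rho> f) \<and>
    (\<forall>B. B \<in> sets lebesgue \<longrightarrow> bounded B \<longrightarrow> \<rho> (indicator B) < \<infinity>) \<and>
    (\<forall>B. B \<in> sets lebesgue \<longrightarrow> bounded B \<longrightarrow>
        (\<exists>C::real. C > 0 \<and> (\<forall>f \<in> borel_measurable lebesgue.
            (\<integral>\<^sup>+ x. indicator B x * f x \<partial>lebesgue) \<le> ennreal C * \<rho> f)))"

definition BFS :: "((real^'n \<Rightarrow> ennreal) \<Rightarrow> ennreal) \<Rightarrow> (real^'n \<Rightarrow> real) set" where
  "BFS \<rho> = {f. f \<in> borel_measurable lebesgue \<and> \<rho> (\<lambda>x. ennreal \<bar>f x\<bar>) < \<infinity>}"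

definition bfs_norm :: "((real^'n \<Rightarrow> ennreal) \<Rightarrow> ennreal) \<Rightarrow> (real^'n \<Rightarrow> real) \<Rightarrow> ennreal" where
  "bfs_norm \<rho> f = \<rho> (\<lambda>x. ennreal \<bar>f x\<bar>)"

text \<open>Associate space and its norm (the norm is given for nonnegative extended functions h,
  applied to |g| for g in the associate space and to Mg).\<close>
definition assoc_space :: "((real^'n \<Rightarrow> ennreal) \<Rightarrow> ennreal) \<Rightarrow> (real^'n \<Rightarrow> real) set" where
  "assoc_space \<rho> = {g. g \<in> borel_measurable lebesgue \<and>
      (\<forall>f \<in> BFS \<rho>. integrable lebesgue (\<lambda>x. f x * g x))}"

definition assoc_norm :: "((real^'n \<Rightarrow> ennreal) \<Rightarrow> ennreal) \<Rightarrow> (real^'n \<Rightarrow> ennreal) \<Rightarrow> ennreal" where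
  "assoc_norm \<rho> h = (SUP f\<in>{f \<in> BFS \<rho>. bfs_norm \<rho> f \<le> 1}.
       \<integral>\<^sup>+ x. ennreal \<bar>f x\<bar> * h x \<partial>lebesgue)"

definition maximal_bounded_on_assoc :: "((real^'n \<Rightarrow> ennreal) \<Rightarrow> ennreal) \<Rightarrow> bool" where
  "maximal_bounded_on_assoc \<rho> \<longleftrightarrow> (\<exists>C::real. \<forall>g \<in> assoc_space \<rho>.
      assoc_norm \<rho> (maximal g) \<le> ennreal C * assoc_norm \<rho> (\<lambda>x. ennreal \<bar>g x\<bar>))"

end

theory Submission
  imports Defs
begin



lemma cube_vol:
  fixes a :: "real^'n"
  assumes "h > 0"
  shows "emeasure lebesgue (cbox a (a + h *\<^sub>R One)) = ennreal (h ^ CARD('n))"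
proof -
  have "emeasure lebesgue (cbox a (a + h *\<^sub>R One)) = emeasure lborel (cbox a (a + h *\<^sub>R One))"
    by simp
  also have "\<dots> = ennreal (\<Prod>b\<in>(Basis::(real^'n) set). h)"
    using assms by (subst emeasure_lborel_cbox_eq) (auto simp: inner_add_left)
  also have "\<dots> = ennreal (h ^ CARD('n))" by simp
  finally show ?thesis .
qed

lemma maximal_ge:
  fixes a x :: "real^'n"
  assumes "h > 0" "x \<in> cbox a (a + h *\<^sub>R One)"
  shows "(\<integral>\<^sup>+ y. indicator (cbox a (a + h *\<^sub>R One)) y * ennreal \<bar>g y\<bar> \<partial>lebesgue) / ennreal (h ^ CARD('n))
         \<le> maximal g x"
proof -
  have "cbox a (a + h *\<^sub>R One) \<in> {Q\<in>cubes. x \<in> Q}"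
    using assms unfolding cubes_def by blast
  then show ?thesis unfolding maximal_def
    by (rule SUP_upper2) (simp add: cube_vol[OF assms(1)])
qed

lemma maximal_cases:
  fixes x :: "real^'n"
  assumes "t < maximal g x"
  obtains a h where "h > 0" "x \<in> cbox a (a + h *\<^sub>R One)"
    "t < (\<integral>\<^sup>+ y. indicator (cbox a (a + h *\<^sub>R One)) y * ennreal \<bar>g y\<bar> \<partial>lebesgue) / ennreal (h ^ CARD('n))"
proof -
  from assms obtain Q where Q: "Q \<in> cubes" "x \<in> Q"
    "t < (\<integral>\<^sup>+ y. indicator Q y * ennreal \<bar>g y\<bar> \<partial>lebesgue) / emeasure lebesgue Q"
    unfolding maximal_def less_SUP_iff by blast
  then obtain a h where "h > 0" "Q = cbox a (a + h *\<^sub>R One)" unfolding cubes_def by blast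
  with Q show ?thesis using that cube_vol[of h a] by auto
qed

lemma delta_choice:
  assumes "h > 0" and lt: "t < I / ennreal (h ^ n)"
  obtains \<delta> :: real where "\<delta> > 0" "t < I / ennreal ((h + 2*\<delta>) ^ n)"
proof (cases "I = top")
  case True
  have e: "\<And>p. top / ennreal p = top" by (simp add: ennreal_divide_eq_top_iff)
  have "t < I / ennreal ((h + 2*1) ^ n)"
    using lt True by (simp only: e)
  then show ?thesis using that[of 1] by auto
next
  case False
  then obtain i where i: "I = ennreal i" "i \<ge> 0" by (cases I) auto
  have "t < top" using lt top.not_eq_extremum by fastforce
  then obtain t' where t': "t = ennreal t'" "t' \<ge> 0" by (cases t) auto
  have dv: "\<And>p::real. p > 0 \<Longrightarrow> ennreal i / ennreal p = ennreal (i / p)"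
    using i by (intro divide_ennreal) auto
  have "t' < i / h ^ n" using lt unfolding i t' dv[OF zero_less_power[OF assms(1)]]
    using i assms t' by (subst (asm) ennreal_less_iff) auto
  then have lt2: "t' * h ^ n < i" using assms by (simp add: field_simps)
  have "((\<lambda>d. t' * (h + 2*d) ^ n) \<longlongrightarrow> t' * (h + 2*0) ^ n) (at_right 0)"
    by (intro tendsto_intros)
  then have "eventually (\<lambda>d. t' * (h + 2*d) ^ n < i) (at_right (0::real))"
    using lt2 by (intro order_tendstoD) auto
  then obtain d0 where d0: "d0 > 0" "\<And>d. 0 < d \<Longrightarrow> d < d0 \<Longrightarrow> t' * (h + 2*d) ^ n < i"
    unfolding eventually_at_right_field by auto
  define d where "d = d0 / 2"
  have d: "d > 0" "t' * (h + 2*d) ^ n < i" using d0(1) d0(2)[of "d0/2"] unfolding d_def by auto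
  have "t' < i / (h + 2*d) ^ n" using d assms by (simp add: field_simps)
  moreover have "h + 2*d > 0" using assms d by auto
  ultimately have "t < I / ennreal ((h + 2*d) ^ n)" unfolding i t' using i t'
    by (subst dv) (auto simp: ennreal_less_iff)
  then show ?thesis using that d by auto
qed


lemma One_nth: "(One::real^'n) $ i = 1"
proof -
  have b: "axis i (1::real) \<in> Basis" by simp
  have "\<And>i. i \<in> (Basis::(real^'n) set) \<Longrightarrow> One \<bullet> i = 1"
    by (simp add: inner_sum_left sum.If_cases inner_Basis)
  from this[OF b] have "One \<bullet> axis i (1::real) = 1" .
  moreover have "(One::real^'n) $ i = One \<bullet> axis i (1::real)" using cart_eq_inner_axis[of "One::real^'n" i] by simp
  ultimately show ?thesis by simp
qed
lemma One_nth': "(\<Sum>x\<in>(Basis::(real^'n) set). x $ i) = 1"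
proof -
  have "(One::real^'n) $ i = (\<Sum>x\<in>(Basis::(real^'n) set). x $ i)" by simp
  with One_nth show ?thesis by simp
qed
lemma mem_cube_cart: "(y::real^'n) \<in> cbox a (a + h *\<^sub>R One) \<longleftrightarrow> (\<forall>i. a$i \<le> y$i \<and> y$i \<le> a$i + h)"
  unfolding mem_box_cart by (simp add: One_nth')
lemma maximal_open: "open {x::real^'n. t < maximal g x}"
proof (rule openI)
  fix x :: "real^'n" assume "x \<in> {x. t < maximal g x}"
  then have "t < maximal g x" by simp
  then obtain a h where ah: "h > 0" "x \<in> cbox a (a + h *\<^sub>R One)"
    "t < (\<integral>\<^sup>+ y. indicator (cbox a (a + h *\<^sub>R One)) y * ennreal \<bar>g y\<bar> \<partial>lebesgue) / ennreal (h ^ CARD('n))"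
    by (rule maximal_cases)
  obtain d where d: "d > 0"
    "t < (\<integral>\<^sup>+ y. indicator (cbox a (a + h *\<^sub>R One)) y * ennreal \<bar>g y\<bar> \<partial>lebesgue) / ennreal ((h + 2*d) ^ CARD('n))"
    by (rule delta_choice[OF ah(1) ah(3)])
  define a' where "a' = a - d *\<^sub>R One"
  define h' where "h' = h + 2*d"
  have h': "h' > 0" using ah d unfolding h'_def by auto
  have sub: "cbox a (a + h *\<^sub>R One) \<subseteq> cbox a' (a' + h' *\<^sub>R One)"
  proof
    fix y assume "y \<in> cbox a (a + h *\<^sub>R One)"
    then have "\<forall>i. a$i \<le> y$i \<and> y$i \<le> a$i + h" using mem_cube_cart by blast
    then show "y \<in> cbox a' (a' + h' *\<^sub>R One)"
      unfolding mem_cube_cart a'_def h'_def using d apply (simp add: One_nth')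
      apply (intro allI) subgoal for i by (drule spec[of _ i]) linarith done
  qed
  have "(\<integral>\<^sup>+ y. indicator (cbox a (a + h *\<^sub>R One)) y * ennreal \<bar>g y\<bar> \<partial>lebesgue)
      \<le> (\<integral>\<^sup>+ y. indicator (cbox a' (a' + h' *\<^sub>R One)) y * ennreal \<bar>g y\<bar> \<partial>lebesgue)"
    using sub by (intro nn_integral_mono) (auto split: split_indicator)
  then have lt: "t < (\<integral>\<^sup>+ y. indicator (cbox a' (a' + h' *\<^sub>R One)) y * ennreal \<bar>g y\<bar> \<partial>lebesgue) / ennreal (h' ^ CARD('n))"
    using d(2) unfolding h'_def[symmetric] by (meson divide_right_mono_ennreal order_less_le_trans)
  show "\<exists>e>0. ball x e \<subseteq> {x. t < maximal g x}"
  proof (intro exI conjI)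
    show "d > 0" by fact
    show "ball x d \<subseteq> {x. t < maximal g x}"
    proof
      fix y assume y: "y \<in> ball x d"
      have yx: "\<And>i. \<bar>y$i - x$i\<bar> < d"
        using y component_le_norm_cart[of "y - x"] by (auto simp: dist_norm norm_minus_commute
           intro: le_less_trans)
      have xa: "\<forall>i. a$i \<le> x$i \<and> x$i \<le> a$i + h" using ah(2) mem_cube_cart by blast
      have "y \<in> cbox a' (a' + h' *\<^sub>R One)"
        unfolding mem_cube_cart a'_def h'_def apply (simp add: One_nth')
        apply (intro allI) subgoal for i using yx[of i] spec[OF xa, of i] by (auto simp: abs_less_iff) done
      from maximal_ge[OF h' this, of g] lt show "y \<in> {x. t < maximal g x}" by auto
    qed
  qed
qed

lemma maximal_measurable: "maximal (g::real^'n\<Rightarrow>real) \<in> borel_measurable lebesgue"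
proof (rule borel_measurableI_greater)
  fix y
  have "open {x::real^'n. y < maximal g x}" by (rule maximal_open)
  then show "{x \<in> space lebesgue. y < maximal g x} \<in> sets lebesgue" by simp
qed




lemma AE_not_in_null: "AE x in M. x \<notin> A \<Longrightarrow> A \<in> sets M \<Longrightarrow> emeasure M A = 0"
  by (subst AE_iff_measurable[symmetric, of A M "\<lambda>x. x \<notin> A"]) (auto dest: sets.sets_into_space)

lemma weight_loc_fin:
  assumes "weight w" "compact K"
  shows "(\<integral>\<^sup>+ x. indicator K x * ennreal \<bar>w x\<bar> \<partial>lebesgue) < \<infinity>"
proof -
  have "set_integrable lebesgue K w" using assms unfolding weight_def by blast
  then have "(\<integral>\<^sup>+ x. ennreal (norm (indicator K x *\<^sub>R w x)) \<partial>lebesgue) < \<infinity>"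
    unfolding set_integrable_def integrable_iff_bounded by blast
  moreover have "(\<integral>\<^sup>+ x. ennreal (norm (indicator K x *\<^sub>R w x)) \<partial>lebesgue)
      = (\<integral>\<^sup>+ x. indicator K x * ennreal \<bar>w x\<bar> \<partial>lebesgue)"
    by (intro nn_integral_cong) (auto split: split_indicator)
  ultimately show ?thesis by simp
qed

lemma cube_of_bounded:
  fixes B :: "(real^'n) set"
  assumes "bounded B"
  obtains a h where "h > 0" "B \<subseteq> cbox a (a + h *\<^sub>R One)"
proof -
  obtain R where R: "\<And>x. x \<in> B \<Longrightarrow> norm x \<le> R" using assms bounded_iff by blast
  define R' where "R' = \<bar>R\<bar> + 1"
  have "B \<subseteq> cbox ((-R') *\<^sub>R One) ((-R') *\<^sub>R One + (2*R') *\<^sub>R One)"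
  proof
    fix x assume x: "x \<in> B"
    have "\<And>i. \<bar>x$i\<bar> \<le> R" using R[OF x] component_le_norm_cart[of x] by (meson order_trans)
    then show "x \<in> cbox ((-R') *\<^sub>R One) ((-R') *\<^sub>R One + (2*R') *\<^sub>R One)"
      unfolding mem_cube_cart R'_def apply (simp add: One_nth')
      apply (intro allI) subgoal for i by (drule_tac x=i in meta_spec) (auto simp: abs_le_iff)
      done
  qed
  moreover have "2*R' > 0" unfolding R'_def by auto
  ultimately show ?thesis using that by blast
qed

lemma weight_cube_pos:
  fixes w :: "real^'n \<Rightarrow> real"
  assumes "weight w" "h > 0"
  shows "(\<integral>\<^sup>+ x. indicator (cbox a (a + h *\<^sub>R One)) x * ennreal \<bar>w x\<bar> \<partial>lebesgue) \<noteq> 0"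
proof
  let ?Q = "cbox a (a + h *\<^sub>R One)"
  assume "(\<integral>\<^sup>+ x. indicator ?Q x * ennreal \<bar>w x\<bar> \<partial>lebesgue) = 0"
  moreover have "(\<lambda>x. indicator ?Q x * ennreal \<bar>w x\<bar>) \<in> borel_measurable lebesgue"
  proof -
    have [measurable]: "w \<in> borel_measurable lebesgue" "?Q \<in> sets lebesgue"
      using assms(1) unfolding weight_def by auto
    show ?thesis by measurable
  qed
  ultimately have "AE x in lebesgue. indicator ?Q x * ennreal \<bar>w x\<bar> = 0"
    by (simp add: nn_integral_0_iff_AE)
  moreover have "AE x in lebesgue. w x > 0" using assms(1) unfolding weight_def by blast
  ultimately have "AE x in lebesgue. x \<notin> ?Q"
    by eventually_elim (auto split: split_indicator)
  then have "emeasure lebesgue ?Q = 0" by (rule AE_not_in_null) simp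
  then have "ennreal (h ^ CARD('n)) = 0" using cube_vol[OF assms(2), of a] by simp
  then show False using assms(2) zero_less_power[OF assms(2), of "CARD('n)"] by (simp add: ennreal_eq_0_iff not_le)
qed


lemma A1_weight: "w \<in> A1 \<Longrightarrow> weight w" unfolding A1_def by blast

lemma A1_const:
  assumes "w \<in> A1"
  obtains C where "C \<ge> 1" "AE x in lebesgue. maximal w x \<le> ennreal (C * w x)"
proof -
  obtain C0 where C0: "AE x in lebesgue. maximal w x \<le> ennreal (C0 * w x)"
    using assms unfolding A1_def by blast
  have pos: "AE x in lebesgue. w x > 0" using A1_weight[OF assms] unfolding weight_def by blast
  have "AE x in lebesgue. maximal w x \<le> ennreal (max C0 1 * w x)"
    using C0 pos
  proof eventually_elim
    case (elim x)
    have "C0 * w x \<le> max C0 1 * w x" using elim(2) by (intro mult_right_mono) auto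
    then show ?case using elim(1) by (meson ennreal_leI order_trans)
  qed
  then show ?thesis using that[of "max C0 1"] by auto
qed

lemma A1_lower:
  fixes w :: "real^'n \<Rightarrow> real"
  assumes "w \<in> A1" "bounded B"
  obtains c where "c > 0" "AE x in lebesgue. x \<in> B \<longrightarrow> c \<le> w x"
proof -
  have wt: "weight w" by (rule A1_weight[OF assms(1)])
  obtain a h where ah: "h > 0" "B \<subseteq> cbox a (a + h *\<^sub>R One)" using cube_of_bounded[OF assms(2)] by blast
  let ?Q = "cbox a (a + h *\<^sub>R One)"
  define J where "J = (\<integral>\<^sup>+ x. indicator ?Q x * ennreal \<bar>w x\<bar> \<partial>lebesgue)"
  have "J < \<infinity>" unfolding J_def by (rule weight_loc_fin[OF wt]) simp
  moreover have "J \<noteq> 0" unfolding J_def by (rule weight_cube_pos[OF wt ah(1)])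
  ultimately obtain j where j: "J = ennreal j" "j > 0"
    by (cases J) (auto simp: top.not_eq_extremum)
  have hp: "h ^ CARD('n) > 0" using ah(1) by simp
  define c0 where "c0 = j / h ^ CARD('n)"
  have c0: "c0 > 0" unfolding c0_def using j hp by simp
  have avg: "J / ennreal (h ^ CARD('n)) = ennreal c0"
    unfolding j c0_def using j hp by (intro divide_ennreal) auto
  obtain C where C: "C \<ge> 1" "AE x in lebesgue. maximal w x \<le> ennreal (C * w x)"
    by (rule A1_const[OF assms(1)])
  have "AE x in lebesgue. x \<in> B \<longrightarrow> c0 / C \<le> w x"
    using C(2)
  proof eventually_elim
    case (elim x)
    show ?case
    proof
      assume "x \<in> B"
      then have "x \<in> ?Q" using ah by blast
      from maximal_ge[OF ah(1) this, of w] have "ennreal c0 \<le> maximal w x"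
        unfolding J_def[symmetric] avg .
      with elim have "ennreal c0 \<le> ennreal (C * w x)" by (meson order_trans)
      then have "c0 \<le> C * w x" using c0
        by (metis ennreal_le_iff2 not_le order_less_le_trans)
      then show "c0 / C \<le> w x" using C(1) by (simp add: field_simps)
    qed
  qed
  moreover have "c0 / C > 0" using c0 C(1) by simp
  ultimately show ?thesis using that by blast
qed


definition rhow :: "(real^'n \<Rightarrow> real) \<Rightarrow> (real^'n \<Rightarrow> ennreal) \<Rightarrow> ennreal" where
  "rhow w f = (\<integral>\<^sup>+ x. f x * ennreal (w x) \<partial>lebesgue)"

lemma rhow_bfn:
  fixes w :: "real^'n \<Rightarrow> real"
  assumes A: "w \<in> A1"
  shows "banach_function_norm (rhow w)"
proof -
  have wt: "weight w" by (rule A1_weight[OF A])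
  have wm[measurable]: "w \<in> borel_measurable lebesgue" using wt unfolding weight_def by blast
  have pos: "AE x in lebesgue. w x > 0" using wt unfolding weight_def by blast
  have P1: "\<forall>f \<in> borel_measurable lebesgue. rhow w f = 0 \<longleftrightarrow> (AE x in lebesgue. f x = 0)"
  proof
    fix f :: "real^'n \<Rightarrow> ennreal" assume [measurable]: "f \<in> borel_measurable lebesgue"
    have "rhow w f = 0 \<longleftrightarrow> (AE x in lebesgue. f x * ennreal (w x) = 0)"
      unfolding rhow_def by (rule nn_integral_0_iff_AE) measurable
    also have "\<dots> \<longleftrightarrow> (AE x in lebesgue. f x = 0)"
    proof
      assume "AE x in lebesgue. f x * ennreal (w x) = 0"
      with pos show "AE x in lebesgue. f x = 0"
        by eventually_elim (simp add: ennreal_eq_0_iff not_le)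
    next
      assume "AE x in lebesgue. f x = 0"
      then show "AE x in lebesgue. f x * ennreal (w x) = 0" by eventually_elim simp
    qed
    finally show "rhow w f = 0 \<longleftrightarrow> (AE x in lebesgue. f x = 0)" .
  qed
  have P2: "\<forall>f \<in> borel_measurable lebesgue. \<forall>a::real. a > 0 \<longrightarrow>
      rhow w (\<lambda>x. ennreal a * f x) = ennreal a * rhow w f"
    unfolding rhow_def by (auto simp: mult.assoc intro!: nn_integral_cmult)
  have P3: "\<forall>f \<in> borel_measurable lebesgue. \<forall>g \<in> borel_measurable lebesgue.
        rhow w (\<lambda>x. f x + g x) \<le> rhow w f + rhow w g"
    unfolding rhow_def by (auto simp: distrib_right intro!: nn_integral_add order.eq_iff[THEN iffD1, THEN conjunct1])
  have P4: "\<forall>f \<in> borel_measurable lebesgue. \<forall>g \<in> borel_measurable lebesgue.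
        (AE x in lebesgue. f x \<le> g x) \<longrightarrow> rhow w f \<le> rhow w g"
  proof (intro ballI impI)
    fix f g :: "real^'n \<Rightarrow> ennreal" assume "AE x in lebesgue. f x \<le> g x"
    then have "AE x in lebesgue. f x * ennreal (w x) \<le> g x * ennreal (w x)"
      by eventually_elim (rule mult_right_mono, auto)
    then show "rhow w f \<le> rhow w g" unfolding rhow_def by (rule nn_integral_mono_AE)
  qed
  have P5: "\<forall>F f. (\<forall>k. F k \<in> borel_measurable lebesgue) \<longrightarrow> f \<in> borel_measurable lebesgue \<longrightarrow>
        (AE x in lebesgue. incseq (\<lambda>k. F k x) \<and> (\<lambda>k. F k x) \<longlonglongrightarrow> f x) \<longrightarrow>
        incseq (\<lambda>k. rhow w (F k)) \<and> (\<lambda>k. rhow w (F k)) \<longlonglongrightarrow> rhow w f"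
  proof (intro allI impI)
    fix F :: "nat \<Rightarrow> real^'n \<Rightarrow> ennreal" and f
    assume Fm: "\<forall>k. F k \<in> borel_measurable lebesgue" and fm: "f \<in> borel_measurable lebesgue"
      and ae: "AE x in lebesgue. incseq (\<lambda>k. F k x) \<and> (\<lambda>k. F k x) \<longlonglongrightarrow> f x"
    have inc: "incseq (\<lambda>k. rhow w (F k))"
    proof (rule incseq_SucI)
      fix k show "rhow w (F k) \<le> rhow w (F (Suc k))"
        unfolding rhow_def using ae
        by (intro nn_integral_mono_AE) (auto elim!: AE_mp intro!: mult_right_mono dest: incseq_SucD)
    qed
    have [measurable]: "\<And>k. F k \<in> borel_measurable lebesgue" using Fm by blast
    have Fm': "\<And>k. (\<lambda>x. F k x * ennreal (w x)) \<in> borel_measurable lebesgue" by measurable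
    have "(\<integral>\<^sup>+ x. (SUP k. F k x * ennreal (w x)) \<partial>lebesgue) = (SUP k. rhow w (F k))"
      unfolding rhow_def using ae Fm'
      by (intro nn_integral_monotone_convergence_SUP_AE)
         (auto elim!: AE_mp intro!: mult_right_mono dest: incseq_SucD)
    moreover have "(\<integral>\<^sup>+ x. (SUP k. F k x * ennreal (w x)) \<partial>lebesgue) = rhow w f"
      unfolding rhow_def using ae
    proof (intro nn_integral_cong_AE, eventually_elim)
      case (elim x)
      have "(SUP k. F k x) = f x" using elim LIMSEQ_unique LIMSEQ_SUP by blast
      then show ?case by (simp add: SUP_mult_right_ennreal[symmetric])
    qed
    ultimately have "(\<lambda>k. rhow w (F k)) \<longlonglongrightarrow> rhow w f"
      using LIMSEQ_SUP[OF inc] by simp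
    with inc show "incseq (\<lambda>k. rhow w (F k)) \<and> (\<lambda>k. rhow w (F k)) \<longlonglongrightarrow> rhow w f" by blast
  qed
  have P6: "\<forall>B. B \<in> sets lebesgue \<longrightarrow> bounded B \<longrightarrow> rhow w (indicator B) < \<infinity>"
  proof (intro allI impI)
    fix B :: "(real^'n) set" assume "B \<in> sets lebesgue" "bounded B"
    then obtain a h where ah: "h > 0" "B \<subseteq> cbox a (a + h *\<^sub>R One)" using cube_of_bounded by blast
    have "rhow w (indicator B) \<le> (\<integral>\<^sup>+ x. indicator (cbox a (a + h *\<^sub>R One)) x * ennreal \<bar>w x\<bar> \<partial>lebesgue)"
      unfolding rhow_def using ah(2)
      by (intro nn_integral_mono) (auto split: split_indicator intro: ennreal_leI)
    also have "\<dots> < \<infinity>" by (rule weight_loc_fin[OF wt]) simp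
    finally show "rhow w (indicator B) < \<infinity>" .
  qed
  have P7: "\<forall>B. B \<in> sets lebesgue \<longrightarrow> bounded B \<longrightarrow>
        (\<exists>C::real. C > 0 \<and> (\<forall>f \<in> borel_measurable lebesgue.
            (\<integral>\<^sup>+ x. indicator B x * f x \<partial>lebesgue) \<le> ennreal C * rhow w f))"
  proof (intro allI impI)
    fix B :: "(real^'n) set" assume "B \<in> sets lebesgue" "bounded B"
    then obtain c where c: "c > 0" "AE x in lebesgue. x \<in> B \<longrightarrow> c \<le> w x"
      using A1_lower[OF A] by blast
    show "\<exists>C::real. C > 0 \<and> (\<forall>f \<in> borel_measurable lebesgue.
            (\<integral>\<^sup>+ x. indicator B x * f x \<partial>lebesgue) \<le> ennreal C * rhow w f)"
    proof (intro exI conjI ballI)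
      show "1/c > 0" using c by simp
      fix f :: "real^'n \<Rightarrow> ennreal" assume fm[measurable]: "f \<in> borel_measurable lebesgue"
      have "(\<integral>\<^sup>+ x. indicator B x * f x \<partial>lebesgue) \<le> (\<integral>\<^sup>+ x. ennreal (1/c) * (f x * ennreal (w x)) \<partial>lebesgue)"
        using c(2)
      proof (intro nn_integral_mono_AE, eventually_elim)
        case (elim x)
        show ?case
        proof (cases "x \<in> B")
          case True
          then have "c \<le> w x" using elim by blast
          then have "1 \<le> (1/c) * w x" using c(1) by (simp add: field_simps)
          then have "ennreal 1 \<le> ennreal (1/c) * ennreal (w x)"
            using c(1) by (simp add: ennreal_mult[symmetric] ennreal_leI del: ennreal_1)
          then have "f x * 1 \<le> f x * (ennreal (1/c) * ennreal (w x))"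
            by (intro mult_left_mono) auto
          then show ?thesis using True by (simp add: ac_simps)
        qed simp
      qed
      also have "\<dots> = ennreal (1/c) * rhow w f"
        unfolding rhow_def by (rule nn_integral_cmult) measurable
      finally show "(\<integral>\<^sup>+ x. indicator B x * f x \<partial>lebesgue) \<le> ennreal (1/c) * rhow w f" .
    qed
  qed
  show ?thesis unfolding banach_function_norm_def
    using P1 P2 P3 P4 P5 P6 P7 by blast
qed


lemma BFS_rhow: "BFS (rhow w) = L1w w"
  unfolding BFS_def L1w_def rhow_def by (simp add: ennreal_mult')

lemma assoc_norm_mono:
  assumes "\<And>x. h1 x \<le> h2 x"
  shows "assoc_norm \<rho> h1 \<le> assoc_norm \<rho> h2"
  unfolding assoc_norm_def
  by (intro SUP_mono) (auto intro!: nn_integral_mono mult_left_mono assms)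

lemma bfn_zero: "banach_function_norm \<rho> \<Longrightarrow> f \<in> borel_measurable lebesgue \<Longrightarrow> \<rho> f = 0 \<longleftrightarrow> (AE x in lebesgue. f x = 0)"
  unfolding banach_function_norm_def by (drule conjunct1) (erule bspec)
lemma bfn_hom: "banach_function_norm \<rho> \<Longrightarrow> f \<in> borel_measurable lebesgue \<Longrightarrow> a > 0 \<Longrightarrow> \<rho> (\<lambda>x. ennreal a * f x) = ennreal a * \<rho> f"
  unfolding banach_function_norm_def by (drule conjunct2, drule conjunct1, drule bspec, assumption, erule allE, erule mp)
lemma bfn_ind: "banach_function_norm \<rho> \<Longrightarrow> B \<in> sets lebesgue \<Longrightarrow> bounded B \<Longrightarrow> \<rho> (indicator B) < \<infinity>"
proof -
  assume a: "banach_function_norm \<rho>" "B \<in> sets lebesgue" "bounded B"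
  have "\<forall>B. B \<in> sets lebesgue \<longrightarrow> bounded B \<longrightarrow> \<rho> (indicator B) < \<infinity>"
    using a(1) unfolding banach_function_norm_def by (elim conjE) assumption
  then show ?thesis using a(2,3) by blast
qed
lemma bfn_loc: "banach_function_norm \<rho> \<Longrightarrow> B \<in> sets lebesgue \<Longrightarrow> bounded B \<Longrightarrow>
        (\<exists>C::real. C > 0 \<and> (\<forall>f \<in> borel_measurable lebesgue.
            (\<integral>\<^sup>+ x. indicator B x * f x \<partial>lebesgue) \<le> ennreal C * \<rho> f))"
proof -
  assume a: "banach_function_norm \<rho>" "B \<in> sets lebesgue" "bounded B"
  have "\<forall>B. B \<in> sets lebesgue \<longrightarrow>
        bounded B \<longrightarrow>
        (\<exists>C::real. C > 0 \<and> (\<forall>f \<in> borel_measurable lebesgue.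
            (\<integral>\<^sup>+ x. indicator B x * f x \<partial>lebesgue) \<le> ennreal C * \<rho> f))"
    using a(1) unfolding banach_function_norm_def by (elim conjE) assumption
  then show ?thesis using a(2,3) by blast
qed

lemma L_bound:
  assumes bfn: "banach_function_norm \<rho>" and f: "f \<in> BFS \<rho>" and hm: "h \<in> borel_measurable lebesgue"
  shows "(\<integral>\<^sup>+ x. ennreal \<bar>f x\<bar> * h x \<partial>lebesgue) \<le> assoc_norm \<rho> h * \<rho> (\<lambda>x. ennreal \<bar>f x\<bar>)"
proof -
  have fm[measurable]: "f \<in> borel_measurable lebesgue" and fin: "\<rho> (\<lambda>x. ennreal \<bar>f x\<bar>) < \<infinity>"
    using f unfolding BFS_def by auto
  have hm'[measurable]: "h \<in> borel_measurable lebesgue" by (rule hm)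
  show ?thesis
  proof (cases "\<rho> (\<lambda>x. ennreal \<bar>f x\<bar>) = 0")
    case True
    then have "AE x in lebesgue. ennreal \<bar>f x\<bar> = 0"
      using bfn_zero[OF bfn, of "\<lambda>x. ennreal \<bar>f x\<bar>"] by simp
    then have "(\<integral>\<^sup>+ x. ennreal \<bar>f x\<bar> * h x \<partial>lebesgue) = 0"
      by (subst nn_integral_0_iff_AE) (auto elim!: AE_mp)
    then show ?thesis by simp
  next
    case False
    then obtain r where r: "\<rho> (\<lambda>x. ennreal \<bar>f x\<bar>) = ennreal r" "r > 0"
      using fin by (cases "\<rho> (\<lambda>x. ennreal \<bar>f x\<bar>)") (auto simp: top.not_eq_extremum)
    define f' where "f' x = f x / r" for x
    have eq: "(\<lambda>x. ennreal \<bar>f' x\<bar>) = (\<lambda>x. ennreal (1/r) * ennreal \<bar>f x\<bar>)"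
      using r(2) by (auto simp: f'_def ennreal_mult'[symmetric])
    have "\<rho> (\<lambda>x. ennreal \<bar>f' x\<bar>) = ennreal (1/r) * ennreal r"
      unfolding eq r(1)[symmetric] using r(2) by (intro bfn_hom[OF bfn]) auto
    also have "\<dots> = 1" using r(2) by (simp add: ennreal_mult[symmetric])
    finally have n1: "\<rho> (\<lambda>x. ennreal \<bar>f' x\<bar>) = 1" .
    have "f' \<in> {f \<in> BFS \<rho>. bfs_norm \<rho> f \<le> 1}"
    proof -
      have "f' \<in> borel_measurable lebesgue" unfolding f'_def[abs_def] by measurable
      then show ?thesis unfolding BFS_def bfs_norm_def using n1 by auto
    qed
    then have le: "(\<integral>\<^sup>+ x. ennreal \<bar>f' x\<bar> * h x \<partial>lebesgue) \<le> assoc_norm \<rho> h"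
      unfolding assoc_norm_def by (rule SUP_upper)
    have "(\<integral>\<^sup>+ x. ennreal \<bar>f x\<bar> * h x \<partial>lebesgue) = (\<integral>\<^sup>+ x. ennreal r * (ennreal \<bar>f' x\<bar> * h x) \<partial>lebesgue)"
    proof (intro nn_integral_cong)
      fix x
      have "ennreal \<bar>f x\<bar> = ennreal r * ennreal \<bar>f' x\<bar>"
        using r(2) by (simp add: f'_def ennreal_mult'[symmetric])
      then show "ennreal \<bar>f x\<bar> * h x = ennreal r * (ennreal \<bar>f' x\<bar> * h x)"
        by (simp add: mult.assoc)
    qed
    also have "\<dots> = ennreal r * (\<integral>\<^sup>+ x. ennreal \<bar>f' x\<bar> * h x \<partial>lebesgue)"
      by (rule nn_integral_cmult) (simp add: f'_def)
    also have "\<dots> \<le> ennreal r * assoc_norm \<rho> h" by (intro mult_left_mono le) auto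
    finally show ?thesis unfolding r(1) by (simp add: ac_simps)
  qed
qed



lemma maximal_scale:
  fixes g w :: "real^'n \<Rightarrow> real"
  assumes wm: "w \<in> borel_measurable lebesgue" and c: "c \<ge> 0"
    and ae: "AE x in lebesgue. \<bar>g x\<bar> \<le> c * \<bar>w x\<bar>"
  shows "maximal g x \<le> ennreal c * maximal w x"
  unfolding maximal_def
proof (rule SUP_least)
  fix Q assume Q: "Q \<in> {Q\<in>cubes. x \<in> Q}"
  then have Qs[measurable]: "Q \<in> sets lebesgue" unfolding cubes_def by auto
  have [measurable]: "w \<in> borel_measurable lebesgue" by (rule wm)
  have "(\<integral>\<^sup>+ y. indicator Q y * ennreal \<bar>g y\<bar> \<partial>lebesgue)
      \<le> (\<integral>\<^sup>+ y. ennreal c * (indicator Q y * ennreal \<bar>w y\<bar>) \<partial>lebesgue)"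
    using ae
  proof (intro nn_integral_mono_AE, eventually_elim)
    case (elim y)
    have "ennreal \<bar>g y\<bar> \<le> ennreal c * ennreal \<bar>w y\<bar>"
      using elim c by (simp add: ennreal_mult[symmetric] ennreal_leI)
    then show ?case by (auto split: split_indicator)
  qed
  also have "\<dots> = ennreal c * (\<integral>\<^sup>+ y. indicator Q y * ennreal \<bar>w y\<bar> \<partial>lebesgue)"
    by (rule nn_integral_cmult) measurable
  finally have "(\<integral>\<^sup>+ y. indicator Q y * ennreal \<bar>g y\<bar> \<partial>lebesgue) / emeasure lebesgue Q
      \<le> ennreal c * ((\<integral>\<^sup>+ y. indicator Q y * ennreal \<bar>w y\<bar> \<partial>lebesgue) / emeasure lebesgue Q)"
    unfolding ennreal_times_divide by (rule divide_right_mono_ennreal)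
  also have "\<dots> \<le> ennreal c * (SUP Q\<in>{Q\<in>cubes. x \<in> Q}. (\<integral>\<^sup>+ y. indicator Q y * ennreal \<bar>w y\<bar> \<partial>lebesgue) / emeasure lebesgue Q)"
    using Q by (intro mult_left_mono SUP_upper) auto
  finally show "(\<integral>\<^sup>+ y. indicator Q y * ennreal \<bar>g y\<bar> \<partial>lebesgue) / emeasure lebesgue Q
      \<le> ennreal c * (SUP Q\<in>{Q\<in>cubes. x \<in> Q}. (\<integral>\<^sup>+ y. indicator Q y * ennreal \<bar>w y\<bar> \<partial>lebesgue) / emeasure lebesgue Q)" .
qed


lemma assoc_pointwise:
  fixes w g :: "real^'n \<Rightarrow> real"
  assumes A: "w \<in> A1" and gm[measurable]: "g \<in> borel_measurable lebesgue" and t: "t > 0"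
    and lt: "assoc_norm (rhow w) (\<lambda>x. ennreal \<bar>g x\<bar>) < ennreal t"
  shows "AE x in lebesgue. \<bar>g x\<bar> \<le> t * w x"
proof (rule ccontr)
  have wt: "weight w" by (rule A1_weight[OF A])
  have wm[measurable]: "w \<in> borel_measurable lebesgue" using wt unfolding weight_def by blast
  have pos: "AE x in lebesgue. w x > 0" using wt unfolding weight_def by blast
  define E where "E = {x. t * w x < \<bar>g x\<bar>}"
  have "{x \<in> space lebesgue. t * w x < \<bar>g x\<bar>} \<in> sets lebesgue" by measurable
  then have Em[measurable]: "E \<in> sets lebesgue" unfolding E_def by simp
  assume "\<not> (AE x in lebesgue. \<bar>g x\<bar> \<le> t * w x)"
  then have neq: "emeasure lebesgue E \<noteq> 0"
    by (subst (asm) AE_iff_measurable[OF Em]) (auto simp: E_def not_le)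
  have Eun: "E = (\<Union>m::nat. E \<inter> ball 0 (real m))"
  proof (intro equalityI subsetI)
    fix x assume "x \<in> E"
    obtain m :: nat where "norm x < real m" using reals_Archimedean2 by blast
    with \<open>x \<in> E\<close> show "x \<in> (\<Union>m::nat. E \<inter> ball 0 (real m))" by auto
  qed auto
  have "\<exists>m::nat. emeasure lebesgue (E \<inter> ball 0 (real m)) \<noteq> 0"
  proof (rule ccontr)
    assume "\<not> ?thesis"
    then have "\<And>m::nat. emeasure lebesgue (E \<inter> ball 0 (real m)) = 0" by blast
    then have "emeasure lebesgue (\<Union>m::nat. E \<inter> ball 0 (real m)) = 0"
      by (rule emeasure_UN_eq_0) auto
    moreover have "emeasure lebesgue E = emeasure lebesgue (\<Union>m::nat. E \<inter> ball 0 (real m))"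
      using Eun by (rule arg_cong)
    ultimately show False using neq by simp
  qed
  then obtain m :: nat where m: "emeasure lebesgue (E \<inter> ball 0 (real m)) \<noteq> 0" by blast
  define E' where "E' = E \<inter> ball 0 (real m)"
  have E'm[measurable]: "E' \<in> sets lebesgue" unfolding E'_def
    using Em by (intro sets.Int) auto
  define c where "c = (\<integral>\<^sup>+ x. indicator E' x * ennreal (w x) \<partial>lebesgue)"
  have "c \<noteq> 0"
  proof
    assume "c = 0"
    then have "AE x in lebesgue. indicator E' x * ennreal (w x) = 0"
      unfolding c_def by (subst (asm) nn_integral_0_iff_AE) auto
    with pos have "AE x in lebesgue. x \<notin> E'"
      by eventually_elim (auto split: split_indicator simp: ennreal_eq_0_iff)
    then have "emeasure lebesgue E' = 0" by (rule AE_not_in_null) simp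
    with m show False unfolding E'_def by simp
  qed
  moreover have "c < \<infinity>"
  proof -
    have "c \<le> (\<integral>\<^sup>+ x. indicator (cball 0 (real m)) x * ennreal \<bar>w x\<bar> \<partial>lebesgue)"
      unfolding c_def E'_def
      by (intro nn_integral_mono) (auto split: split_indicator intro: ennreal_leI)
    also have "\<dots> < \<infinity>" by (rule weight_loc_fin[OF wt]) simp
    finally show ?thesis .
  qed
  ultimately obtain c' where c': "c = ennreal c'" "c' > 0"
    by (cases c) (auto simp: top.not_eq_extremum)
  define f where "f x = indicator E' x / c'" for x
  have fm[measurable]: "f \<in> borel_measurable lebesgue" unfolding f_def[abs_def] by measurable
  have fabs: "\<And>x. ennreal \<bar>f x\<bar> = ennreal (1/c') * indicator E' x"
    using c'(2) by (auto simp: f_def split: split_indicator)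
  have "rhow w (\<lambda>x. ennreal \<bar>f x\<bar>) = (\<integral>\<^sup>+ x. ennreal (1/c') * (indicator E' x * ennreal (w x)) \<partial>lebesgue)"
    unfolding rhow_def fabs by (simp add: mult.assoc)
  also have "\<dots> = ennreal (1/c') * c" unfolding c_def by (rule nn_integral_cmult) measurable
  also have "\<dots> = 1" using c' by (simp add: ennreal_mult[symmetric])
  finally have n1: "rhow w (\<lambda>x. ennreal \<bar>f x\<bar>) = 1" .
  then have "f \<in> {f \<in> BFS (rhow w). bfs_norm (rhow w) f \<le> 1}"
    unfolding BFS_def bfs_norm_def by auto
  then have "(\<integral>\<^sup>+ x. ennreal \<bar>f x\<bar> * ennreal \<bar>g x\<bar> \<partial>lebesgue) \<le> assoc_norm (rhow w) (\<lambda>x. ennreal \<bar>g x\<bar>)"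
    unfolding assoc_norm_def by (rule SUP_upper)
  moreover have "(\<integral>\<^sup>+ x. ennreal t * (ennreal \<bar>f x\<bar> * ennreal (w x)) \<partial>lebesgue)
      \<le> (\<integral>\<^sup>+ x. ennreal \<bar>f x\<bar> * ennreal \<bar>g x\<bar> \<partial>lebesgue)"
  proof (intro nn_integral_mono)
    fix x
    show "ennreal t * (ennreal \<bar>f x\<bar> * ennreal (w x)) \<le> ennreal \<bar>f x\<bar> * ennreal \<bar>g x\<bar>"
    proof (cases "x \<in> E'")
      case True
      then have tw: "t * w x < \<bar>g x\<bar>" unfolding E'_def E_def by auto
      have "ennreal t * ennreal (w x) \<le> ennreal \<bar>g x\<bar>"
      proof (cases "w x \<ge> 0")
        case True
        then show ?thesis using tw t by (simp add: ennreal_mult[symmetric] ennreal_leI)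
      next
        case False
        then show ?thesis by (simp add: ennreal_neg)
      qed
      then have "ennreal \<bar>f x\<bar> * (ennreal t * ennreal (w x)) \<le> ennreal \<bar>f x\<bar> * ennreal \<bar>g x\<bar>"
        by (intro mult_left_mono) auto
      then show ?thesis by (simp add: ac_simps)
    next
      case False
      then show ?thesis by (simp add: f_def)
    qed
  qed
  moreover have "(\<integral>\<^sup>+ x. ennreal t * (ennreal \<bar>f x\<bar> * ennreal (w x)) \<partial>lebesgue) = ennreal t"
  proof -
    have "(\<lambda>x. ennreal \<bar>f x\<bar> * ennreal (w x)) \<in> borel_measurable lebesgue" by measurable
    then show ?thesis using n1 unfolding rhow_def by (simp add: nn_integral_cmult)
  qed
  ultimately show False using lt by simp
qed


lemma rhow_maxbound:
  fixes w :: "real^'n \<Rightarrow> real"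
  assumes A: "w \<in> A1"
  shows "maximal_bounded_on_assoc (rhow w)"
proof -
  obtain C where C: "C \<ge> 1" "AE x in lebesgue. maximal w x \<le> ennreal (C * w x)"
    by (rule A1_const[OF A])
  have wt: "weight w" by (rule A1_weight[OF A])
  have wm[measurable]: "w \<in> borel_measurable lebesgue" using wt unfolding weight_def by blast
  have pos: "AE x in lebesgue. w x > 0" using wt unfolding weight_def by blast
  show ?thesis unfolding maximal_bounded_on_assoc_def
  proof (intro exI[of _ C] ballI)
    fix g assume "g \<in> assoc_space (rhow w)"
    then have gm[measurable]: "g \<in> borel_measurable lebesgue" unfolding assoc_space_def by blast
    define K where "K = assoc_norm (rhow w) (\<lambda>x. ennreal \<bar>g x\<bar>)"
    show "assoc_norm (rhow w) (maximal g) \<le> ennreal C * assoc_norm (rhow w) (\<lambda>x. ennreal \<bar>g x\<bar>)"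
    proof (cases "K = \<infinity>")
      case True
      have "ennreal C \<noteq> 0" using C(1) by simp
      then show ?thesis using True unfolding K_def by (simp add: ennreal_mult_top)
    next
      case False
      then obtain k where k: "K = ennreal k" "k \<ge> 0" by (cases K) (auto simp: top.not_eq_extremum)
      show ?thesis
      proof (rule ennreal_le_epsilon)
        fix e :: real assume e: "e > 0"
        define t where "t = k + e / C"
        have "e / C > 0" using e C(1) by simp
        then have t: "t > 0" "k < t" unfolding t_def using k(2) by auto
        have "K < ennreal t" unfolding k(1) using t k by (simp add: ennreal_less_iff)
        then have ae: "AE x in lebesgue. \<bar>g x\<bar> \<le> t * w x"
          unfolding K_def by (intro assoc_pointwise[OF A gm t(1)])
        have "AE x in lebesgue. \<bar>g x\<bar> \<le> t * \<bar>w x\<bar>"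
          using ae
        proof eventually_elim
          case (elim x)
          have "t * w x \<le> t * \<bar>w x\<bar>" using t(1) by (intro mult_left_mono) auto
          then show ?case using elim by linarith
        qed
        then have ms: "\<And>x. maximal g x \<le> ennreal t * maximal w x"
          using t(1) by (intro maximal_scale[OF wm]) auto
        have "assoc_norm (rhow w) (maximal g) \<le> ennreal (t * C)"
          unfolding assoc_norm_def
        proof (rule SUP_least)
          fix f assume f: "f \<in> {f \<in> BFS (rhow w). bfs_norm (rhow w) f \<le> 1}"
          then have fm[measurable]: "f \<in> borel_measurable lebesgue" unfolding BFS_def by blast
          have "AE x in lebesgue. ennreal \<bar>f x\<bar> * maximal g x \<le> ennreal (t * C) * (ennreal \<bar>f x\<bar> * ennreal (w x))"
            using C(2) pos
          proof eventually_elim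
            case (elim x)
            have "maximal g x \<le> ennreal t * ennreal (C * w x)"
              using ms[of x] elim(1) by (meson mult_left_mono order_trans zero_le)
            also have "\<dots> = ennreal (t * C) * ennreal (w x)"
              using t(1) C(1) elim(2) by (simp add: ennreal_mult[symmetric] ac_simps)
            finally have "ennreal \<bar>f x\<bar> * maximal g x \<le> ennreal \<bar>f x\<bar> * (ennreal (t * C) * ennreal (w x))"
              by (intro mult_left_mono) auto
            then show ?case by (simp add: ac_simps)
          qed
          then have "(\<integral>\<^sup>+ x. ennreal \<bar>f x\<bar> * maximal g x \<partial>lebesgue)
              \<le> (\<integral>\<^sup>+ x. ennreal (t * C) * (ennreal \<bar>f x\<bar> * ennreal (w x)) \<partial>lebesgue)"
            by (rule nn_integral_mono_AE)
          also have "\<dots> = ennreal (t * C) * rhow w (\<lambda>x. ennreal \<bar>f x\<bar>)"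
            unfolding rhow_def by (rule nn_integral_cmult) measurable
          also have "\<dots> \<le> ennreal (t * C) * 1"
            using f unfolding bfs_norm_def by (intro mult_left_mono) auto
          finally show "(\<integral>\<^sup>+ x. ennreal \<bar>f x\<bar> * maximal g x \<partial>lebesgue) \<le> ennreal (t * C)" by simp
        qed
        also have "ennreal (t * C) = ennreal C * K + ennreal e"
        proof -
          have "t * C = C * k + e" unfolding t_def using C(1) by (simp add: field_simps)
          moreover have "ennreal (C * k + e) = ennreal (C * k) + ennreal e"
            using C(1) k(2) e by (intro ennreal_plus) auto
          moreover have "ennreal (C * k) = ennreal C * ennreal k"
            using C(1) k(2) by (intro ennreal_mult) auto
          ultimately show ?thesis unfolding k(1) by simp
        qed
        finally show "assoc_norm (rhow w) (maximal g) \<le> ennreal C * assoc_norm (rhow w) (\<lambda>x. ennreal \<bar>g x\<bar>) + ennreal e"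
          unfolding K_def .
      qed
    qed
  qed
qed



lemma ennreal_term_le_suminf: "(f i :: ennreal) \<le> (\<Sum>i. f i)"
  using sum_le_suminf[OF summableI, of "{i}" f] by simp

lemma ennreal_geom_half: "(\<Sum>m. ennreal ((1/2)^m)) = 2"
proof -
  have "(\<lambda>m. (1/2::real)^m) sums (1 / (1 - 1/2))" by (rule geometric_sums) simp
  then have "(\<lambda>m. (1/2::real)^m) sums 2" by simp
  then have "(\<lambda>m. ennreal ((1/2)^m)) sums ennreal 2"
    by (subst sums_ennreal) auto
  then have "(\<Sum>m. ennreal ((1/2)^m)) = ennreal 2" by (rule sums_unique[symmetric])
  then show ?thesis by simp
qed

lemma exists_H0:
  fixes \<rho> :: "(real^'n \<Rightarrow> ennreal) \<Rightarrow> ennreal"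
  assumes bfn: "banach_function_norm \<rho>"
  obtains H0 :: "real^'n \<Rightarrow> ennreal" where "H0 \<in> borel_measurable lebesgue" "\<And>x. H0 x > 0"
    "\<And>f. f \<in> BFS \<rho> \<Longrightarrow> (\<integral>\<^sup>+ x. ennreal \<bar>f x\<bar> * H0 x \<partial>lebesgue) \<le> 2 * \<rho> (\<lambda>x. ennreal \<bar>f x\<bar>)"
proof -
  have "\<forall>m::nat. \<exists>D::real. D > 0 \<and> (\<forall>f \<in> borel_measurable lebesgue.
      (\<integral>\<^sup>+ x. indicator (ball (0::real^'n) (real (Suc m))) x * f x \<partial>lebesgue) \<le> ennreal D * \<rho> f)"
    using bfn_loc[OF bfn] by simp
  then obtain D where D: "\<And>m. D m > 0" "\<And>m f. f \<in> borel_measurable lebesgue \<Longrightarrow>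
      (\<integral>\<^sup>+ x. indicator (ball (0::real^'n) (real (Suc m))) x * f x \<partial>lebesgue) \<le> ennreal (D m) * \<rho> f"
    by metis
  define D' where "D' m = max (D m) 1" for m
  have D': "\<And>m. D' m \<ge> 1" "\<And>m. D m \<le> D' m" unfolding D'_def by auto
  define cf where "cf m = 1 / (2^m * D' m)" for m
  have cfpos: "\<And>m. cf m > 0" unfolding cf_def using D'(1) by (simp add: less_le_trans[OF zero_less_one])
  have cfD: "\<And>m. cf m * D' m = (1/2)^m" unfolding cf_def using D'(1)
    by (simp add: field_simps) (metis less_le_trans not_one_le_zero zero_less_one order.strict_iff_not)
  have [measurable]: "\<And>m. ball (0::real^'n) (real (Suc m)) \<in> sets lebesgue" by simp
  define H0 where "H0 x = (\<Sum>m. ennreal (cf m) * indicator (ball (0::real^'n) (real (Suc m))) x)" for x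
  show ?thesis
  proof
    show "H0 \<in> borel_measurable lebesgue" unfolding H0_def[abs_def] by measurable
  next
    fix x :: "real^'n"
    obtain m :: nat where "norm x < real m" using reals_Archimedean2 by blast
    then have "x \<in> ball 0 (real (Suc m))" by simp
    then have "0 < ennreal (cf m) * indicator (ball (0::real^'n) (real (Suc m))) x"
      using cfpos[of m] by simp
    also have "\<dots> \<le> H0 x" unfolding H0_def by (rule ennreal_term_le_suminf)
    finally show "H0 x > 0" .
  next
    fix f assume f: "f \<in> BFS \<rho>"
    then have fm[measurable]: "f \<in> borel_measurable lebesgue" unfolding BFS_def by blast
    have "(\<integral>\<^sup>+ x. ennreal \<bar>f x\<bar> * H0 x \<partial>lebesgue)
        = (\<integral>\<^sup>+ x. (\<Sum>m. ennreal (cf m) * (indicator (ball (0::real^'n) (real (Suc m))) x * ennreal \<bar>f x\<bar>)) \<partial>lebesgue)"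
      unfolding H0_def by (intro nn_integral_cong) (simp add: ennreal_suminf_cmult[symmetric] ac_simps)
    also have "\<dots> = (\<Sum>m. (\<integral>\<^sup>+ x. ennreal (cf m) * (indicator (ball (0::real^'n) (real (Suc m))) x * ennreal \<bar>f x\<bar>) \<partial>lebesgue))"
      by (rule nn_integral_suminf) measurable
    also have "\<dots> \<le> (\<Sum>m. ennreal ((1/2)^m) * \<rho> (\<lambda>x. ennreal \<bar>f x\<bar>))"
    proof (intro suminf_le summableI)
      fix m
      have "(\<integral>\<^sup>+ x. ennreal (cf m) * (indicator (ball (0::real^'n) (real (Suc m))) x * ennreal \<bar>f x\<bar>) \<partial>lebesgue)
          = ennreal (cf m) * (\<integral>\<^sup>+ x. indicator (ball (0::real^'n) (real (Suc m))) x * ennreal \<bar>f x\<bar> \<partial>lebesgue)"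
        by (rule nn_integral_cmult) measurable
      also have "\<dots> \<le> ennreal (cf m) * (ennreal (D m) * \<rho> (\<lambda>x. ennreal \<bar>f x\<bar>))"
        by (intro mult_left_mono D(2)) auto
      also have "\<dots> \<le> ennreal (cf m) * (ennreal (D' m) * \<rho> (\<lambda>x. ennreal \<bar>f x\<bar>))"
        using D'(2)[of m] by (intro mult_left_mono mult_right_mono ennreal_leI) auto
      also have "\<dots> = ennreal ((1/2)^m) * \<rho> (\<lambda>x. ennreal \<bar>f x\<bar>)"
        using cfpos[of m] D'(1)[of m]
        by (simp add: mult.assoc[symmetric] ennreal_mult[symmetric] cfD del: power_divide power_one_over)
      finally show "(\<integral>\<^sup>+ x. ennreal (cf m) * (indicator (ball (0::real^'n) (real (Suc m))) x * ennreal \<bar>f x\<bar>) \<partial>lebesgue)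
          \<le> ennreal ((1/2)^m) * \<rho> (\<lambda>x. ennreal \<bar>f x\<bar>)" .
    qed
    also have "\<dots> = 2 * \<rho> (\<lambda>x. ennreal \<bar>f x\<bar>)"
      by (simp add: ennreal_geom_half del: power_divide power_one_over)
    finally show "(\<integral>\<^sup>+ x. ennreal \<bar>f x\<bar> * H0 x \<partial>lebesgue) \<le> 2 * \<rho> (\<lambda>x. ennreal \<bar>f x\<bar>)" .
  qed
qed


lemma enn_abs_le: "ennreal \<bar>enn2real y\<bar> \<le> y"
  by (simp add: ennreal_enn2real_if)

lemma ennreal_suminf_shift_le: "(\<Sum>j. f (Suc j)) \<le> (\<Sum>j. f j :: ennreal)"
proof -
  have "(\<Sum>j. f j) = (\<Sum>j. f (j + 1)) + (\<Sum>j<1. f j)"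
    by (rule suminf_offset) (rule summableI)
  then have "(\<Sum>j. f j) = (\<Sum>j. f (Suc j)) + f 0" by simp
  moreover have "(\<Sum>j. f (Suc j)) + 0 \<le> (\<Sum>j. f (Suc j)) + f 0" by (rule add_left_mono) simp
  ultimately show ?thesis by simp
qed

lemma rubio:
  fixes \<rho> :: "(real^'n \<Rightarrow> ennreal) \<Rightarrow> ennreal"
  assumes bfn: "banach_function_norm \<rho>" and mb: "maximal_bounded_on_assoc \<rho>"
  shows "assoc_space \<rho> \<inter> A1 \<noteq> {}"
proof -
  obtain Cm where Cm: "\<forall>g \<in> assoc_space \<rho>. assoc_norm \<rho> (maximal g) \<le> ennreal Cm * assoc_norm \<rho> (\<lambda>x. ennreal \<bar>g x\<bar>)"
    using mb unfolding maximal_bounded_on_assoc_def by blast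
  define C where "C = max Cm 1"
  have C1: "C \<ge> 1" unfolding C_def by simp
  have Cb: "\<And>g. g \<in> assoc_space \<rho> \<Longrightarrow> assoc_norm \<rho> (maximal g) \<le> ennreal C * assoc_norm \<rho> (\<lambda>x. ennreal \<bar>g x\<bar>)"
  proof -
    fix g assume "g \<in> assoc_space \<rho>"
    then have "assoc_norm \<rho> (maximal g) \<le> ennreal Cm * assoc_norm \<rho> (\<lambda>x. ennreal \<bar>g x\<bar>)" using Cm by blast
    also have "\<dots> \<le> ennreal C * assoc_norm \<rho> (\<lambda>x. ennreal \<bar>g x\<bar>)"
      unfolding C_def by (intro mult_right_mono ennreal_leI) auto
    finally show "assoc_norm \<rho> (maximal g) \<le> ennreal C * assoc_norm \<rho> (\<lambda>x. ennreal \<bar>g x\<bar>)" .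
  qed
  obtain H0 :: "real^'n \<Rightarrow> ennreal" where H0: "H0 \<in> borel_measurable lebesgue" "\<And>x. H0 x > 0"
    "\<And>f. f \<in> BFS \<rho> \<Longrightarrow> (\<integral>\<^sup>+ x. ennreal \<bar>f x\<bar> * H0 x \<partial>lebesgue) \<le> 2 * \<rho> (\<lambda>x. ennreal \<bar>f x\<bar>)"
    by (rule exists_H0[OF bfn]) blast
  define H where "H = rec_nat H0 (\<lambda>k Hk. maximal (\<lambda>x. enn2real (Hk x)))"
  have H_0: "H 0 = H0" and H_Suc: "\<And>k. H (Suc k) = maximal (\<lambda>x. enn2real (H k x))"
    by (simp_all add: H_def)
  have Hm[measurable]: "\<And>k. H k \<in> borel_measurable lebesgue"
  proof -
    fix k show "H k \<in> borel_measurable lebesgue"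
      by (induct k) (simp_all add: H_0 H_Suc H0(1) maximal_measurable)
  qed
  have NH: "\<And>k. assoc_norm \<rho> (H k) \<le> ennreal (2 * C^k)"
  proof -
    fix k show "assoc_norm \<rho> (H k) \<le> ennreal (2 * C^k)"
    proof (induct k)
      case 0
      show ?case unfolding H_0 assoc_norm_def
      proof (rule SUP_least)
        fix f assume "f \<in> {f \<in> BFS \<rho>. bfs_norm \<rho> f \<le> 1}"
        then have f: "f \<in> BFS \<rho>" "\<rho> (\<lambda>x. ennreal \<bar>f x\<bar>) \<le> 1" unfolding bfs_norm_def by auto
        have "(\<integral>\<^sup>+ x. ennreal \<bar>f x\<bar> * H0 x \<partial>lebesgue) \<le> 2 * \<rho> (\<lambda>x. ennreal \<bar>f x\<bar>)" by (rule H0(3)[OF f(1)])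
        also have "\<dots> \<le> 2 * 1" by (intro mult_left_mono f(2)) auto
        finally show "(\<integral>\<^sup>+ x. ennreal \<bar>f x\<bar> * H0 x \<partial>lebesgue) \<le> ennreal (2 * C ^ 0)" by simp
      qed
    next
      case (Suc k)
      define g where "g x = enn2real (H k x)" for x
      have gm[measurable]: "g \<in> borel_measurable lebesgue" unfolding g_def[abs_def] by measurable
      have gA: "g \<in> assoc_space \<rho>"
        unfolding assoc_space_def
      proof (intro CollectI conjI ballI)
        show "g \<in> borel_measurable lebesgue" by (rule gm)
        fix f assume f: "f \<in> BFS \<rho>"
        then have fm[measurable]: "f \<in> borel_measurable lebesgue" and ffin: "\<rho> (\<lambda>x. ennreal \<bar>f x\<bar>) < \<infinity>"
          unfolding BFS_def by auto
        have "(\<integral>\<^sup>+ x. ennreal (norm (f x * g x)) \<partial>lebesgue) \<le> (\<integral>\<^sup>+ x. ennreal \<bar>f x\<bar> * H k x \<partial>lebesgue)"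
        proof (intro nn_integral_mono)
          fix x
          have "ennreal (norm (f x * g x)) = ennreal \<bar>f x\<bar> * ennreal \<bar>g x\<bar>"
            by (simp add: abs_mult ennreal_mult)
          also have "\<dots> \<le> ennreal \<bar>f x\<bar> * H k x"
            unfolding g_def by (intro mult_left_mono enn_abs_le) auto
          finally show "ennreal (norm (f x * g x)) \<le> ennreal \<bar>f x\<bar> * H k x" .
        qed
        also have "\<dots> \<le> assoc_norm \<rho> (H k) * \<rho> (\<lambda>x. ennreal \<bar>f x\<bar>)"
          by (rule L_bound[OF bfn f Hm])
        also have "\<dots> < \<infinity>"
        proof -
          have "assoc_norm \<rho> (H k) < \<infinity>"
            using Suc by (rule le_less_trans) simp
          then show ?thesis using ffin by (simp add: ennreal_mult_less_top)
        qed
        finally show "integrable lebesgue (\<lambda>x. f x * g x)"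
          unfolding integrable_iff_bounded by simp
      qed
      have "assoc_norm \<rho> (H (Suc k)) = assoc_norm \<rho> (maximal g)" by (simp add: H_Suc g_def[abs_def])
      also have "\<dots> \<le> ennreal C * assoc_norm \<rho> (\<lambda>x. ennreal \<bar>g x\<bar>)" by (rule Cb[OF gA])
      also have "\<dots> \<le> ennreal C * assoc_norm \<rho> (H k)"
        unfolding g_def by (intro mult_left_mono assoc_norm_mono enn_abs_le) auto
      also have "\<dots> \<le> ennreal C * ennreal (2 * C^k)" by (intro mult_left_mono Suc) auto
      also have "\<dots> = ennreal (C * (2 * C^k))" using C1 by (intro ennreal_mult[symmetric]) auto
      also have "\<dots> = ennreal (2 * C ^ Suc k)" by (simp add: ac_simps)
      finally show ?case .
    qed
  qed
  define c where "c = 1 / (2 * C)"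
  have c: "c > 0" "c * C = 1/2" "c \<le> 1" unfolding c_def using C1 by (auto simp: field_simps)
  define W where "W x = (\<Sum>k. ennreal (c^k) * H k x)" for x
  have Wm[measurable]: "W \<in> borel_measurable lebesgue" unfolding W_def[abs_def] by measurable
  have HkW: "\<And>k x. ennreal (c^k) * H k x \<le> W x" unfolding W_def by (rule ennreal_term_le_suminf)
  have WI: "\<And>f. f \<in> BFS \<rho> \<Longrightarrow> (\<integral>\<^sup>+ x. ennreal \<bar>f x\<bar> * W x \<partial>lebesgue) < \<infinity>"
  proof -
    fix f assume f: "f \<in> BFS \<rho>"
    then have fm[measurable]: "f \<in> borel_measurable lebesgue" and ffin: "\<rho> (\<lambda>x. ennreal \<bar>f x\<bar>) < \<infinity>"
      unfolding BFS_def by auto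
    have "(\<integral>\<^sup>+ x. ennreal \<bar>f x\<bar> * W x \<partial>lebesgue)
        = (\<integral>\<^sup>+ x. (\<Sum>k. ennreal (c^k) * (ennreal \<bar>f x\<bar> * H k x)) \<partial>lebesgue)"
      unfolding W_def by (intro nn_integral_cong) (simp add: ennreal_suminf_cmult[symmetric] ac_simps)
    also have "\<dots> = (\<Sum>k. (\<integral>\<^sup>+ x. ennreal (c^k) * (ennreal \<bar>f x\<bar> * H k x) \<partial>lebesgue))"
      by (rule nn_integral_suminf) measurable
    also have "\<dots> \<le> (\<Sum>k. ennreal ((1/2)^k) * (2 * \<rho> (\<lambda>x. ennreal \<bar>f x\<bar>)))"
    proof (intro suminf_le summableI)
      fix k
      have "(\<integral>\<^sup>+ x. ennreal (c^k) * (ennreal \<bar>f x\<bar> * H k x) \<partial>lebesgue)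
          = ennreal (c^k) * (\<integral>\<^sup>+ x. ennreal \<bar>f x\<bar> * H k x \<partial>lebesgue)"
        by (rule nn_integral_cmult) measurable
      also have "\<dots> \<le> ennreal (c^k) * (assoc_norm \<rho> (H k) * \<rho> (\<lambda>x. ennreal \<bar>f x\<bar>))"
        by (intro mult_left_mono L_bound[OF bfn f Hm]) auto
      also have "\<dots> \<le> ennreal (c^k) * (ennreal (2 * C^k) * \<rho> (\<lambda>x. ennreal \<bar>f x\<bar>))"
        by (intro mult_left_mono mult_right_mono NH) auto
      also have "\<dots> = ennreal (c^k * (2 * C^k)) * \<rho> (\<lambda>x. ennreal \<bar>f x\<bar>)"
        using c C1 by (subst ennreal_mult) (auto simp: mult.assoc)
      also have "c^k * (2 * C^k) = (1/2)^k * 2"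
      proof -
        have "c^k * C^k = (1/2)^k" unfolding power_mult_distrib[symmetric] c(2) ..
        then show ?thesis by (simp add: ac_simps del: power_divide power_one_over)
      qed
      also have "ennreal ((1/2)^k * 2) = ennreal ((1/2)^k) * 2"
        by (subst ennreal_mult) auto
      finally show "(\<integral>\<^sup>+ x. ennreal (c^k) * (ennreal \<bar>f x\<bar> * H k x) \<partial>lebesgue)
          \<le> ennreal ((1/2)^k) * (2 * \<rho> (\<lambda>x. ennreal \<bar>f x\<bar>))" by (simp add: ac_simps del: power_divide power_one_over)
    qed
    also have "\<dots> = 2 * (2 * \<rho> (\<lambda>x. ennreal \<bar>f x\<bar>))"
      using ennreal_geom_half by (simp del: power_divide power_one_over)
    also have "\<dots> < \<infinity>" using ffin by (simp add: ennreal_mult_less_top)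
    finally show "(\<integral>\<^sup>+ x. ennreal \<bar>f x\<bar> * W x \<partial>lebesgue) < \<infinity>" .
  qed
  have indBFS: "\<And>K. K \<in> sets lebesgue \<Longrightarrow> bounded K \<Longrightarrow> (\<lambda>x. indicator K x :: real) \<in> BFS \<rho>"
  proof -
    fix K :: "(real^'n) set" assume K: "K \<in> sets lebesgue" "bounded K"
    have "(\<lambda>x. ennreal \<bar>indicator K x :: real\<bar>) = indicator K"
      by (auto split: split_indicator)
    then show "(\<lambda>x. indicator K x :: real) \<in> BFS \<rho>" unfolding BFS_def
      using bfn_ind[OF bfn K] K(1) by auto
  qed
  have Wfin: "AE x in lebesgue. W x \<noteq> \<infinity>"
  proof -
    have "\<And>m::nat. AE x in lebesgue. x \<in> ball 0 (real m) \<longrightarrow> W x \<noteq> \<infinity>"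
    proof -
      fix m :: nat
      have bm: "ball (0::real^'n) (real m) \<in> sets lebesgue" by simp
      have "(\<integral>\<^sup>+ x. ennreal \<bar>indicator (ball 0 (real m)) x :: real\<bar> * W x \<partial>lebesgue) < \<infinity>"
        by (rule WI[OF indBFS[OF bm]]) simp
      then have "AE x in lebesgue. ennreal \<bar>indicator (ball (0::real^'n) (real m)) x :: real\<bar> * W x \<noteq> \<infinity>"
      proof (intro nn_integral_noteq_infinite)
        have [measurable]: "ball (0::real^'n) (real m) \<in> sets lebesgue" by simp
        show "(\<lambda>x. ennreal \<bar>indicator (ball (0::real^'n) (real m)) x :: real\<bar> * W x) \<in> borel_measurable lebesgue"
          by measurable
      qed (use \<open>(\<integral>\<^sup>+ x. _ \<partial>lebesgue) < \<infinity>\<close> in simp)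
      then show "AE x in lebesgue. x \<in> ball 0 (real m) \<longrightarrow> W x \<noteq> \<infinity>"
        by eventually_elim (auto split: split_indicator)
    qed
    then have "AE x in lebesgue. \<forall>m::nat. x \<in> ball 0 (real m) \<longrightarrow> W x \<noteq> \<infinity>"
      by (subst AE_all_countable) blast
    then show ?thesis
    proof eventually_elim
      case (elim x)
      obtain m :: nat where "norm x < real m" using reals_Archimedean2 by blast
      then show ?case using elim by auto
    qed
  qed
  have Hfin: "AE x in lebesgue. \<forall>k. H k x \<noteq> \<infinity>"
    using Wfin
  proof eventually_elim
    case (elim x)
    show ?case
    proof
      fix k
      show "H k x \<noteq> \<infinity>"
      proof
        assume "H k x = \<infinity>"
        then have "ennreal (c^k) * H k x = \<infinity>" using c(1) by (simp add: ennreal_mult_top)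
        with HkW[of k x] elim show False by (simp add: top_unique)
      qed
    qed
  qed
  define w where "w x = enn2real (W x)" for x
  have wm[measurable]: "w \<in> borel_measurable lebesgue" unfolding w_def[abs_def] by measurable
  have wint: "\<And>f. f \<in> BFS \<rho> \<Longrightarrow> integrable lebesgue (\<lambda>x. f x * w x)"
  proof -
    fix f assume f: "f \<in> BFS \<rho>"
    then have fm[measurable]: "f \<in> borel_measurable lebesgue" unfolding BFS_def by auto
    have "(\<integral>\<^sup>+ x. ennreal (norm (f x * w x)) \<partial>lebesgue) \<le> (\<integral>\<^sup>+ x. ennreal \<bar>f x\<bar> * W x \<partial>lebesgue)"
    proof (intro nn_integral_mono)
      fix x
      have "ennreal (norm (f x * w x)) = ennreal \<bar>f x\<bar> * ennreal \<bar>w x\<bar>"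
        by (simp add: abs_mult ennreal_mult)
      also have "\<dots> \<le> ennreal \<bar>f x\<bar> * W x"
        unfolding w_def by (intro mult_left_mono enn_abs_le) auto
      finally show "ennreal (norm (f x * w x)) \<le> ennreal \<bar>f x\<bar> * W x" .
    qed
    also have "\<dots> < \<infinity>" by (rule WI[OF f])
    finally show "integrable lebesgue (\<lambda>x. f x * w x)"
      unfolding integrable_iff_bounded by simp
  qed
  have wA: "w \<in> assoc_space \<rho>" unfolding assoc_space_def using wint wm by blast
  have wpos: "AE x in lebesgue. w x > 0"
    using Wfin
  proof eventually_elim
    case (elim x)
    have "0 < H0 x" by (rule H0(2))
    also have "H0 x = ennreal (c^0) * H 0 x" by (simp add: H_0)
    also have "\<dots> \<le> W x" by (rule HkW)
    finally show ?case unfolding w_def using elim by (simp add: enn2real_positive_iff top.not_eq_extremum)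
  qed
  have wloc: "\<And>K. compact K \<Longrightarrow> set_integrable lebesgue K w"
  proof -
    fix K :: "(real^'n) set" assume "compact K"
    then have "closed K" "bounded K" by (auto intro: compact_imp_closed compact_imp_bounded)
    then have K: "K \<in> sets lebesgue" "bounded K" by auto
    have "integrable lebesgue (\<lambda>x. indicator K x * w x)" by (rule wint[OF indBFS[OF K]])
    then show "set_integrable lebesgue K w" unfolding set_integrable_def by simp
  qed
  have wt: "weight w" unfolding weight_def using wm wpos wloc by blast
  have wA1: "AE x in lebesgue. maximal w x \<le> ennreal ((2*C) * w x)"
    using Wfin Hfin
  proof eventually_elim
    case (elim x)
    have Wx: "W x = ennreal (w x)" unfolding w_def using elim(1)
      by (simp add: ennreal_enn2real top.not_eq_extremum)
    have cS: "\<And>k. ennreal (c^k) = ennreal (2*C) * ennreal (c^(Suc k))"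
    proof -
      fix k
      have Cc: "2*C*c = 1" using C1 unfolding c_def by simp
      have "(2*C) * c^(Suc k) = (2*C*c) * c^k" by (simp only: power_Suc mult.assoc)
      then have eqr: "c^k = (2*C) * c^(Suc k)" using Cc by simp
      have eqe: "ennreal (2*C) * ennreal (c^(Suc k)) = ennreal ((2*C) * c^(Suc k))"
        using C1 c(1) by (intro ennreal_mult[symmetric]) auto
      show "ennreal (c^k) = ennreal (2*C) * ennreal (c^(Suc k))"
        unfolding eqe by (rule arg_cong[where f=ennreal]) (rule eqr)
    qed
    have "maximal w x \<le> ennreal (2*C) * W x"
      unfolding maximal_def
    proof (rule SUP_least)
      fix Q assume Q: "Q \<in> {Q \<in> cubes. x \<in> Q}"
      then have Qm[measurable]: "Q \<in> sets lebesgue" unfolding cubes_def by auto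
      define J where "J k = (\<integral>\<^sup>+ y. indicator Q y * ennreal \<bar>enn2real (H k y)\<bar> \<partial>lebesgue)" for k
      have "(\<integral>\<^sup>+ y. indicator Q y * ennreal \<bar>w y\<bar> \<partial>lebesgue) \<le> (\<integral>\<^sup>+ y. indicator Q y * W y \<partial>lebesgue)"
        unfolding w_def by (intro nn_integral_mono mult_left_mono enn_abs_le) auto
      also have "\<dots> = (\<integral>\<^sup>+ y. (\<Sum>k. ennreal (c^k) * (indicator Q y * H k y)) \<partial>lebesgue)"
        unfolding W_def by (intro nn_integral_cong) (simp add: ennreal_suminf_cmult[symmetric] ac_simps)
      also have "\<dots> = (\<Sum>k. (\<integral>\<^sup>+ y. ennreal (c^k) * (indicator Q y * H k y) \<partial>lebesgue))"
        by (rule nn_integral_suminf) measurable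
      also have "\<dots> = (\<Sum>k. ennreal (c^k) * J k)"
      proof (rule suminf_cong)
        fix k
        have "(\<integral>\<^sup>+ y. ennreal (c^k) * (indicator Q y * H k y) \<partial>lebesgue) = ennreal (c^k) * (\<integral>\<^sup>+ y. indicator Q y * H k y \<partial>lebesgue)"
          by (rule nn_integral_cmult) measurable
        also have "(\<integral>\<^sup>+ y. indicator Q y * H k y \<partial>lebesgue) = J k"
          unfolding J_def using Hfin
        proof (intro nn_integral_cong_AE, eventually_elim)
          case (elim y)
          then have "H k y \<noteq> \<infinity>" by blast
          then show ?case by (simp add: ennreal_enn2real top.not_eq_extremum)
        qed
        finally show "(\<integral>\<^sup>+ y. ennreal (c^k) * (indicator Q y * H k y) \<partial>lebesgue) = ennreal (c^k) * J k" .
      qed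
      finally have I: "(\<integral>\<^sup>+ y. indicator Q y * ennreal \<bar>w y\<bar> \<partial>lebesgue) \<le> (\<Sum>k. ennreal (c^k) * J k)" .
      have "(\<integral>\<^sup>+ y. indicator Q y * ennreal \<bar>w y\<bar> \<partial>lebesgue) / emeasure lebesgue Q
          \<le> (\<Sum>k. ennreal (c^k) * J k) / emeasure lebesgue Q"
        by (rule divide_right_mono_ennreal[OF I])
      also have "\<dots> = (\<Sum>k. ennreal (c^k) * (J k / emeasure lebesgue Q))"
        by (simp add: ennreal_times_divide)
      also have "\<dots> \<le> (\<Sum>k. ennreal (c^k) * H (Suc k) x)"
      proof (intro suminf_le summableI mult_left_mono)
        fix k
        show "J k / emeasure lebesgue Q \<le> H (Suc k) x"
          unfolding H_Suc maximal_def J_def using Q by (intro SUP_upper) auto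
      qed auto
      also have "\<dots> = ennreal (2*C) * (\<Sum>k. ennreal (c^(Suc k)) * H (Suc k) x)"
      proof -
        have "(\<Sum>k. ennreal (c^k) * H (Suc k) x) = (\<Sum>k. ennreal (2*C) * (ennreal (c^(Suc k)) * H (Suc k) x))"
          by (rule suminf_cong) (subst cS, rule mult.assoc)
        then show ?thesis by simp
      qed
      also have "\<dots> \<le> ennreal (2*C) * W x"
        unfolding W_def by (intro mult_left_mono ennreal_suminf_shift_le[of "\<lambda>k. ennreal (c^k) * H k x"]) auto
      finally show "(\<integral>\<^sup>+ y. indicator Q y * ennreal \<bar>w y\<bar> \<partial>lebesgue) / emeasure lebesgue Q \<le> ennreal (2*C) * W x" .
    qed
    also have "ennreal (2*C) * W x = ennreal ((2*C) * w x)"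
      unfolding Wx using C1 by (intro ennreal_mult[symmetric]) (auto simp: w_def)
    finally show ?case .
  qed
  have "w \<in> A1" unfolding A1_def using wt wA1 by blast
  with wA show ?thesis by blast
qed


lemma U3_sub_U1:
  fixes \<rho> :: "(real^'n \<Rightarrow> ennreal) \<Rightarrow> ennreal"
  assumes f: "f \<in> BFS \<rho>" and w: "w \<in> assoc_space \<rho>"
  shows "f \<in> L1w w"
proof -
  have fm: "f \<in> borel_measurable lebesgue" using f unfolding BFS_def by blast
  have "integrable lebesgue (\<lambda>x. f x * w x)" using w f unfolding assoc_space_def by blast
  then have "(\<integral>\<^sup>+ x. ennreal (norm (f x * w x)) \<partial>lebesgue) < \<infinity>"
    unfolding integrable_iff_bounded by blast
  moreover have "(\<integral>\<^sup>+ x. ennreal (\<bar>f x\<bar> * w x) \<partial>lebesgue) \<le> (\<integral>\<^sup>+ x. ennreal (norm (f x * w x)) \<partial>lebesgue)"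
    by (intro nn_integral_mono ennreal_leI) (simp add: abs_mult mult_left_mono)
  ultimately show ?thesis unfolding L1w_def using fm by auto
qed

theorem mainTheorem19:
  shows "(\<Union>w\<in>(A1 :: (real^'n \<Rightarrow> real) set). L1w w)
           = \<Union>{BFS \<rho> | \<rho> :: (real^'n \<Rightarrow> ennreal) \<Rightarrow> ennreal.
                  banach_function_norm \<rho> \<and> maximal_bounded_on_assoc \<rho>}
       \<and> \<Union>{BFS \<rho> | \<rho> :: (real^'n \<Rightarrow> ennreal) \<Rightarrow> ennreal.
                  banach_function_norm \<rho> \<and> maximal_bounded_on_assoc \<rho>}
           = \<Union>{BFS \<rho> | \<rho> :: (real^'n \<Rightarrow> ennreal) \<Rightarrow> ennreal.
                  banach_function_norm \<rho> \<and> assoc_space \<rho> \<inter> A1 \<noteq> {}}"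
    (is "?U1 = ?U2 \<and> _ = ?U3")
proof -
  have s12: "?U1 \<subseteq> ?U2"
  proof
    fix f assume "f \<in> ?U1"
    then obtain w where w: "w \<in> A1" "f \<in> L1w w" by blast
    then have "f \<in> BFS (rhow w)" by (simp add: BFS_rhow)
    moreover have "banach_function_norm (rhow w)" by (rule rhow_bfn[OF w(1)])
    moreover have "maximal_bounded_on_assoc (rhow w)" by (rule rhow_maxbound[OF w(1)])
    ultimately show "f \<in> ?U2" by blast
  qed
  have s23: "?U2 \<subseteq> ?U3"
  proof
    fix f assume "f \<in> ?U2"
    then obtain \<rho> :: "(real^'n \<Rightarrow> ennreal) \<Rightarrow> ennreal" where r: "f \<in> BFS \<rho>"
      "banach_function_norm \<rho>" "maximal_bounded_on_assoc \<rho>" by blast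
    then have "assoc_space \<rho> \<inter> A1 \<noteq> {}" by (intro rubio)
    with r show "f \<in> ?U3" by blast
  qed
  have s31: "?U3 \<subseteq> ?U1"
  proof
    fix f assume "f \<in> ?U3"
    then obtain \<rho> :: "(real^'n \<Rightarrow> ennreal) \<Rightarrow> ennreal" where r: "f \<in> BFS \<rho>"
      "assoc_space \<rho> \<inter> A1 \<noteq> {}" by blast
    then obtain w where w: "w \<in> assoc_space \<rho>" "w \<in> A1" by blast
    have "f \<in> L1w w" by (rule U3_sub_U1[OF r(1) w(1)])
    with w(2) show "f \<in> ?U1" by blast
  qed
  have e1: "?U1 = ?U2" by (rule equalityI[OF s12 order_trans[OF s23 s31]])
  have e2: "?U2 = ?U3" by (rule equalityI[OF s23 order_trans[OF s31 s12]])
  show ?thesis using e1 e2 by (rule conjI)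
qed

end
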